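(* Let $\mathcal{A}$ be a probabilistic automaton with state set $Q$. Every limit-word of the Markov monoid of $\mathcal{A}$ has $\sharp$-height at most $|Q|$; equivalently, the Markov monoid of $\mathcal{A}$ equals $S_{|Q|}$.
   Context: Fix a finite alphabet $A$ and a probabilistic automaton $\mathcal{A}=(Q,q_0,\Delta,F)$, $\Delta:Q\times A\to\mathcal{D}(Q)$. A limit-word is a map $\mathbf{u}:Q\times Q\to\{0,1\}$ such that every $s$ has some $t$ with $\mathbf{u}(s,t)=1$. Concatenation: $(\mathbf{u}\cdot\mathbf{v})(s,t)=1$ iff there is $q$ with $\mathbf{u}(s,q)=\mathbf{v}(q,t)=1$. $\mathbf{u}$ is idempotent if $\mathbf{u}\cdot\mathbf{u}=\mathbf{u}$; for idempotent $\mathbf{u}$, $s$ is $\mathbf{u}$-recurrent if for all $t$, $\mathbf{u}(s,t)=1\Rightarrow\mathbf{u}(t,s)=1$, and $\mathbf{u}^\sharp(s,t)=1$ iff $\mathbf{u}(s,t)=1$ and $t$ is $\mathbf{u}$-recurrent. For $a\in A$, $\mathbf{a}(s,t)=1$ iff $\Delta(s,a)(t)>0$; $\mathbf{1}$ is the identity. The Markov monoid of $\mathcal{A}$ is the smallest set of limit-words containing $\{\mathbf{a}\mid a\in A\}\cup\{\mathbf{1}\}$ and closed under concatenation and iteration of idempotents. For a set $T$ of limit-words let $\langle T\rangle$ be the set of finite concatenations of elements of $T$. Define $S_0=\langle\{\mathbf{a}\mid a\in A\}\cup\{\mathbf{1}\}\rangle$ and $S_{p+1}=\langle S_p\cup\{\mathbf{u}^\sharp\mid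 \mathbf{u}\in S_p,\ \mathbf{u}\text{ idempotent}\}\rangle$. The $\sharp$-height of a limit-word $\mathbf{u}$ is the least $p$ such that $\mathbf{u}\in S_p$. *)

theory Defs
  imports "HOL-Probability.Probability_Mass_Function"
begin

text \<open>Only the transition function matters for the Markov monoid; initial state and
  final states are carried along for fidelity.\<close>

record ('q, 'a) prob_automaton =
  init :: 'q
  trans :: "'q \<Rightarrow> 'a \<Rightarrow> 'q pmf"
  final :: "'q set"

type_synonym 'q lword = "'q \<Rightarrow> 'q \<Rightarrow> bool"

definition is_limit_word :: "'q lword \<Rightarrow> bool" where
  "is_limit_word u \<longleftrightarrow> (\<forall>s. \<exists>t. u s t)"

definition lconcat :: "'q lword \<Rightarrow> 'q lword \<Rightarrow> 'q lword" where
  "lconcat u v = (\<lambda>s t. \<exists>q. u s q \<and> v q t)"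

definition idempotent_lw :: "'q lword \<Rightarrow> bool" where
  "idempotent_lw u \<longleftrightarrow> lconcat u u = u"

definition recurrent :: "'q lword \<Rightarrow> 'q \<Rightarrow> bool" where
  "recurrent u s \<longleftrightarrow> (\<forall>t. u s t \<longrightarrow> u t s)"

definition sharp :: "'q lword \<Rightarrow> 'q lword" where
  "sharp u = (\<lambda>s t. u s t \<and> recurrent u t)"

definition letter_word :: "('q, 'a) prob_automaton \<Rightarrow> 'a \<Rightarrow> 'q lword" where
  "letter_word M a = (\<lambda>s t. pmf (trans M s a) t > 0)"

definition one_word :: "'q lword" where
  "one_word = (\<lambda>s t. s = t)"

inductive_set markov_monoid :: "('q, 'a) prob_automaton \<Rightarrow> 'q lword set"
  for M :: "('q, 'a) prob_automaton" where
  letter: "letter_word M a \<in> markov_monoid M"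
| one: "one_word \<in> markov_monoid M"
| concat: "u \<in> markov_monoid M \<Longrightarrow> v \<in> markov_monoid M \<Longrightarrow> lconcat u v \<in> markov_monoid M"
| iter: "u \<in> markov_monoid M \<Longrightarrow> idempotent_lw u \<Longrightarrow> sharp u \<in> markov_monoid M"

inductive_set gen :: "'q lword set \<Rightarrow> 'q lword set" for T where
  base: "u \<in> T \<Longrightarrow> u \<in> gen T"
| concat: "u \<in> gen T \<Longrightarrow> v \<in> gen T \<Longrightarrow> lconcat u v \<in> gen T"

fun S_level :: "('q, 'a) prob_automaton \<Rightarrow> nat \<Rightarrow> 'q lword set" where
  "S_level M 0 = gen (range (letter_word M) \<union> {one_word})"
| "S_level M (Suc p) = gen (S_level M p \<union> {sharp u | u. u \<in> S_level M p \<and> idempotent_lw u})"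

definition sharp_height :: "('q, 'a) prob_automaton \<Rightarrow> 'q lword \<Rightarrow> nat" where
  "sharp_height M u = (LEAST p. u \<in> S_level M p)"

end

theory Submission
  imports Defs
begin

definition rowU :: "'q lword \<Rightarrow> 'q set \<Rightarrow> 'q set" where
  "rowU u S = {t. \<exists>s\<in>S. u s t}"

definition chn :: "'q lword \<Rightarrow> 'q set set \<Rightarrow> bool" where
  "chn u C \<longleftrightarrow> C \<subseteq> range (rowU u) \<and> {} \<notin> C \<and> (\<forall>A\<in>C. \<forall>B\<in>C. A \<subseteq> B \<or> B \<subseteq> A)"

definition hgt :: "('q::finite) lword \<Rightarrow> nat" where
  "hgt u = Max (card ` {C. chn u C})"

lemma chn_card:
  fixes u :: "('q::finite) lword"
  assumes "chn u C" shows "card C \<le> CARD('q)"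
proof -
  have inj: "inj_on card C"
  proof (rule inj_onI)
    fix A B assume "A \<in> C" "B \<in> C" "card A = card B"
    with assms have "A \<subseteq> B \<or> B \<subseteq> A" unfolding chn_def by blast
    thus "A = B"
    proof
      assume "A \<subseteq> B" thus "A = B" using card_subset_eq[OF finite \<open>A \<subseteq> B\<close>] \<open>card A = card B\<close> by simp
    next
      assume "B \<subseteq> A" thus "A = B" using card_subset_eq[OF finite \<open>B \<subseteq> A\<close>] \<open>card A = card B\<close> by simp
    qed
  qed
  have "card ` C \<subseteq> {1..CARD('q)}"
  proof
    fix k assume "k \<in> card ` C"
    then obtain A where "A \<in> C" "k = card A" by auto
    moreover have "A \<noteq> {}" using assms \<open>A \<in> C\<close> unfolding chn_def by auto
    ultimately show "k \<in> {1..CARD('q)}"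
      by (simp add: Suc_leI card_gt_0_iff card_mono)
  qed
  hence "card (card ` C) \<le> card {1..CARD('q)}" by (rule card_mono[OF finite_atLeastAtMost])
  hence "card (card ` C) \<le> CARD('q)" by simp
  thus ?thesis using card_image[OF inj] by simp
qed

lemma hgt_fin:
  fixes u :: "('q::finite) lword"
  shows "finite (card ` {C. chn u C})" "card ` {C. chn u C} \<noteq> {}"
proof -
  have "card ` {C. chn u C} \<subseteq> {0..CARD('q)}" using chn_card by auto
  thus "finite (card ` {C. chn u C})" using finite_subset by blast
  have "chn u {}" unfolding chn_def by auto
  thus "card ` {C. chn u C} \<noteq> {}" by auto
qed

lemma hgt_le: "hgt (u::('q::finite) lword) \<le> CARD('q)"
  unfolding hgt_def using hgt_fin[of u] chn_card[of u] by (auto simp: Max_le_iff)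

lemma hgt_ge: "chn (u::('q::finite) lword) C \<Longrightarrow> card C \<le> hgt u"
  unfolding hgt_def using hgt_fin[of u] by (auto intro: Max_ge)

lemma hgt_wit: "\<exists>C. chn (u::('q::finite) lword) C \<and> card C = hgt u"
  unfolding hgt_def using Max_in[OF hgt_fin[of u]] by auto

lemma hgt_mono:
  assumes "\<And>C. chn (u::('q::finite) lword) C \<Longrightarrow> \<exists>D. chn (v::('q::finite) lword) D \<and> card C \<le> card D"
  shows "hgt u \<le> hgt v"
proof -
  obtain C where C: "chn u C" "card C = hgt u" using hgt_wit by blast
  obtain D where D: "chn v D" "card C \<le> card D" using assms[OF C(1)] by blast
  have "card D \<le> hgt v" by (rule hgt_ge[OF D(1)])
  thus ?thesis using C D by linarith
qed

lemma rowU_concat: "rowU (lconcat x y) S = rowU y (rowU x S)"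
  unfolding rowU_def lconcat_def by blast

lemma range_concat: "range (rowU (lconcat x y)) \<subseteq> range (rowU y)"
proof
  fix A assume "A \<in> range (rowU (lconcat x y))"
  then obtain S where "A = rowU (lconcat x y) S" by (rule rangeE)
  hence "A = rowU y (rowU x S)" by (simp only: rowU_concat)
  thus "A \<in> range (rowU y)" by (rule image_eqI) (rule UNIV_I)
qed

lemma chn_concat_right: "chn (lconcat x y) C \<Longrightarrow> chn y C"
  unfolding chn_def using range_concat[of x y] by (meson subset_trans)

lemma hgt_concat_right: "hgt (lconcat x y) \<le> hgt (y::('q::finite) lword)"
  by (rule hgt_mono) (rule exI, rule conjI, erule chn_concat_right, rule le_refl)

lemma hgt_concat_left: "hgt (lconcat x y) \<le> hgt (x::('q::finite) lword)"
proof (rule hgt_mono)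
  fix C assume C: "chn (lconcat x y) C"
  define L where "L c = rowU x {s. \<forall>t. lconcat x y s t \<longrightarrow> t \<in> c}" for c
  have inv: "rowU y (L c) = c" if "c \<in> C" for c
  proof -
    from C that have "c \<in> range (rowU (lconcat x y))" unfolding chn_def by blast
    then obtain S where S: "c = rowU (lconcat x y) S" by (rule rangeE)
    show ?thesis
    proof
      show "rowU y (L c) \<subseteq> c" unfolding L_def rowU_def lconcat_def by blast
      show "c \<subseteq> rowU y (L c)"
      proof
        fix t assume "t \<in> c"
        then obtain s q where "s \<in> S" "x s q" "y q t" using S unfolding rowU_def lconcat_def by blast
        moreover have "\<forall>t. lconcat x y s t \<longrightarrow> t \<in> c" using S \<open>s \<in> S\<close> unfolding rowU_def by blast
        ultimately show "t \<in> rowU y (L c)" unfolding L_def rowU_def by blast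
      qed
    qed
  qed
  have inj: "inj_on L C"
  proof (rule inj_onI)
    fix a b assume ab: "a \<in> C" "b \<in> C" "L a = L b"
    have "a = rowU y (L a)" using inv[OF ab(1)] by simp
    also have "\<dots> = rowU y (L b)" using ab(3) by simp
    also have "\<dots> = b" using inv[OF ab(2)] .
    finally show "a = b" .
  qed
  have mono: "L c \<subseteq> L c'" if "c \<subseteq> c'" for c c'
    using that unfolding L_def rowU_def by blast
  have "chn x (L ` C)"
    unfolding chn_def
  proof (intro conjI)
    show "L ` C \<subseteq> range (rowU x)" unfolding L_def by (rule image_subsetI) (rule rangeI)
    show "{} \<notin> L ` C"
    proof
      assume "{} \<in> L ` C"
      then obtain c where "c \<in> C" "L c = {}" by (metis imageE)
      hence "c = rowU y {}" using inv[of c] by simp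
      hence "c = {}" unfolding rowU_def by simp
      with C \<open>c \<in> C\<close> show False unfolding chn_def by blast
    qed
    show "\<forall>A\<in>L ` C. \<forall>B\<in>L ` C. A \<subseteq> B \<or> B \<subseteq> A"
    proof (intro ballI)
      fix A B assume "A \<in> L ` C" "B \<in> L ` C"
      then obtain a b where ab: "a \<in> C" "b \<in> C" "A = L a" "B = L b" by (metis imageE)
      hence "a \<subseteq> b \<or> b \<subseteq> a" using C unfolding chn_def by blast
      thus "A \<subseteq> B \<or> B \<subseteq> A" using mono ab by blast
    qed
  qed
  moreover have "card (L ` C) = card C" by (rule card_image[OF inj])
  ultimately show "\<exists>D. chn x D \<and> card C \<le> card D" by (intro exI[of _ "L ` C"]) simp
qed

lemma idem_eq:
  assumes "idempotent_lw e" shows "(\<exists>q. e s q \<and> e q t) \<longleftrightarrow> e s t"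
proof -
  have "lconcat e e = e" using assms unfolding idempotent_lw_def .
  hence "lconcat e e s t = e s t" by simp
  thus ?thesis unfolding lconcat_def .
qed

lemma idem_trans: "idempotent_lw e \<Longrightarrow> e s q \<Longrightarrow> e q t \<Longrightarrow> e s t"
  using idem_eq[of e s t] by blast

lemma rec_closed:
  assumes idem: "idempotent_lw e" and rt: "recurrent e t" and tr: "e t r" shows "recurrent e r"
  unfolding recurrent_def
proof (intro allI impI)
  fix q assume rq: "e r q"
  have "e t q" by (rule idem_trans[OF idem tr rq])
  hence "e q t" using rt unfolding recurrent_def by blast
  thus "e q r" by (rule idem_trans[OF idem _ tr])
qed

lemma hgt_sharp:
  fixes e :: "('q::finite) lword"
  assumes idem: "idempotent_lw e" and tot: "is_limit_word e" and ne: "sharp e \<noteq> e"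
  shows "hgt (sharp e) < hgt e"
proof -
  obtain C where C: "chn (sharp e) C" "card C = hgt (sharp e)" using hgt_wit by blast
  define R where "R = {t. recurrent e t}"
  define I where "I = rowU e UNIV"
  have inRS: "d = rowU e d" "d \<subseteq> R" "d \<subseteq> I" if "d \<in> C" for d
  proof -
    from C that have "d \<in> range (rowU (sharp e))" unfolding chn_def by blast
    then obtain S where S: "d = rowU (sharp e) S" by (rule rangeE)
    show "d \<subseteq> R" using S unfolding R_def rowU_def sharp_def by blast
    show "d \<subseteq> I" using S unfolding I_def rowU_def sharp_def by blast
    show "d = rowU e d"
    proof
      show "d \<subseteq> rowU e d"
      proof
        fix t assume "t \<in> d"
        hence rt: "recurrent e t" using S unfolding rowU_def sharp_def by blast
        obtain r where "e t r" using tot unfolding is_limit_word_def by blast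
        hence "e r t" using rt unfolding recurrent_def by blast
        hence "e t t" using idem_trans[OF idem \<open>e t r\<close>] by blast
        thus "t \<in> rowU e d" using \<open>t \<in> d\<close> unfolding rowU_def by blast
      qed
      show "rowU e d \<subseteq> d"
      proof
        fix t assume "t \<in> rowU e d"
        then obtain t' where "t' \<in> d" "e t' t" unfolding rowU_def by blast
        then obtain s where "s \<in> S" "e s t'" "recurrent e t'" using S unfolding rowU_def sharp_def by blast
        hence "e s t" "recurrent e t" using idem_trans[OF idem _ \<open>e t' t\<close>] rec_closed[OF idem _ \<open>e t' t\<close>] by blast+
        thus "t \<in> d" using S \<open>s \<in> S\<close> unfolding rowU_def sharp_def by blast
      qed
    qed
  qed
  have "\<exists>s t. sharp e s t \<noteq> e s t"
  proof (rule ccontr)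
    assume "\<not> ?thesis"
    hence "\<And>s t. sharp e s t = e s t" by blast
    hence "sharp e = e" by (intro ext)
    with ne show False by simp
  qed
  then obtain s t where "sharp e s t \<noteq> e s t" by blast
  hence st: "e s t" "\<not> recurrent e t" unfolding sharp_def by blast+
  have tI: "t \<in> I" "t \<notin> R" using st unfolding I_def R_def rowU_def by blast+
  have IC: "I \<notin> C" using inRS tI by blast
  have "chn e (insert I C)"
    unfolding chn_def
  proof (intro conjI)
    show "insert I C \<subseteq> range (rowU e)"
    proof
      fix d assume "d \<in> insert I C"
      thus "d \<in> range (rowU e)"
      proof
        assume "d = I" thus ?thesis unfolding I_def by (rule ssubst) (rule rangeI)
      next
        assume "d \<in> C" hence "d = rowU e d" by (rule inRS(1))
        thus ?thesis by (rule ssubst) (rule rangeI)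
      qed
    qed
    show "{} \<notin> insert I C" using C tI unfolding chn_def by blast
    show "\<forall>A\<in>insert I C. \<forall>B\<in>insert I C. A \<subseteq> B \<or> B \<subseteq> A"
      using C inRS(3) unfolding chn_def by blast
  qed
  hence "card (insert I C) \<le> hgt e" by (rule hgt_ge)
  moreover have "card (insert I C) = Suc (card C)" by (rule card_insert_disjoint[OF finite IC])
  ultimately show ?thesis using C by simp
qed

lemma sharp_total_aux:
  fixes e :: "('q::finite) lword"
  assumes idem: "idempotent_lw e" and tot: "is_limit_word e"
    and t: "e s t" and mn: "\<And>y. e s y \<Longrightarrow> card {r. e t r} \<le> card {r. e y r}"
  shows "\<exists>r. sharp e s r"
proof -
  have eq: "{r. e q r} = {r. e t r}" if "e t q" for q
  proof -
    have sub: "{r. e q r} \<subseteq> {r. e t r}" using idem_trans[OF idem that] by blast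
    have "e s q" using idem_trans[OF idem t that] .
    hence c1: "card {r. e t r} \<le> card {r. e q r}" by (rule mn)
    have c2: "card {r. e q r} \<le> card {r. e t r}" by (rule card_mono[OF finite sub])
    from c1 c2 have "card {r. e q r} = card {r. e t r}" by simp
    thus ?thesis by (rule card_subset_eq[OF finite sub])
  qed
  obtain r where "e t r" using tot unfolding is_limit_word_def by auto
  have "recurrent e r" unfolding recurrent_def
  proof (intro allI impI)
    fix q assume "e r q"
    hence "e t q" using idem_trans[OF idem \<open>e t r\<close>] by blast
    hence "{r. e q r} = {r. e t r}" by (rule eq)
    thus "e q r" using \<open>e t r\<close> by auto
  qed
  moreover have "e s r" using idem_trans[OF idem t \<open>e t r\<close>] .
  ultimately show ?thesis unfolding sharp_def by auto
qed

lemma sharp_total: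
  fixes e :: "('q::finite) lword"
  assumes idem: "idempotent_lw e" and tot: "is_limit_word e"
  shows "is_limit_word (sharp e)"
  unfolding is_limit_word_def
proof
  fix s
  obtain t0 where "e s t0" using tot unfolding is_limit_word_def by auto
  from ex_has_least_nat[of "e s" t0 "\<lambda>t. card {r. e t r}", OF this]
  obtain t where "e s t" "\<forall>y. e s y \<longrightarrow> card {r. e t r} \<le> card {r. e y r}" by blast
  thus "\<exists>t. sharp e s t" using sharp_total_aux[OF idem tot, of s t] by blast
qed

lemma mm_total: "u \<in> markov_monoid M \<Longrightarrow> is_limit_word (u :: ('q::finite) lword)"
proof (induction rule: markov_monoid.induct)
  case (letter a)
  show ?case unfolding is_limit_word_def letter_word_def
  proof
    fix s
    obtain t where "t \<in> set_pmf (trans M s a)" using set_pmf_not_empty by fastforce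
    hence "0 < pmf (trans M s a) t" by (rule pmf_positive)
    thus "\<exists>t. 0 < pmf (trans M s a) t" by blast
  qed
next
  case one thus ?case unfolding is_limit_word_def one_word_def by auto
next
  case (concat u v) thus ?case unfolding is_limit_word_def lconcat_def by metis
next
  case (iter u) thus ?case by (intro sharp_total)
qed

lemma gen_sub: "T \<subseteq> gen T" by (auto intro: gen.base)

lemma gen_mono: "T \<subseteq> T' \<Longrightarrow> gen T \<subseteq> gen T'"
proof
  fix u assume T: "T \<subseteq> T'" and "u \<in> gen T"
  from \<open>u \<in> gen T\<close> show "u \<in> gen T'"
    by (induction rule: gen.induct) (use T in \<open>auto intro: gen.intros\<close>)
qed

lemma S_Suc: "S_level M p \<subseteq> S_level M (Suc p)"
proof -
  have "S_level M p \<subseteq> S_level M p \<union> {sharp u | u. u \<in> S_level M p \<and> idempotent_lw u}" by blast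
  also have "\<dots> \<subseteq> gen (S_level M p \<union> {sharp u | u. u \<in> S_level M p \<and> idempotent_lw u})" by (rule gen_sub)
  also have "\<dots> = S_level M (Suc p)" by simp
  finally show ?thesis .
qed

lemma S_concat: "u \<in> S_level M k \<Longrightarrow> v \<in> S_level M k \<Longrightarrow> lconcat u v \<in> S_level M k"
  by (cases k) (auto intro: gen.concat)

lemma S_mono: "p \<le> q \<Longrightarrow> S_level M p \<subseteq> S_level M q"
  using lift_Suc_mono_le[of "S_level M", OF S_Suc] by blast

lemma gen_in_mm: "T \<subseteq> markov_monoid M \<Longrightarrow> gen T \<subseteq> markov_monoid M"
proof
  fix u assume T: "T \<subseteq> markov_monoid M" and "u \<in> gen T"
  from \<open>u \<in> gen T\<close> show "u \<in> markov_monoid M"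
    by (induction rule: gen.induct) (use T in \<open>auto intro: markov_monoid.intros\<close>)
qed

lemma S_in_mm: "S_level M p \<subseteq> markov_monoid M"
proof (induction p)
  case 0 show ?case by (simp, rule gen_in_mm) (auto intro: markov_monoid.intros)
next
  case (Suc p) show ?case
    by (simp, rule gen_in_mm) (use Suc in \<open>auto intro: markov_monoid.intros\<close>)
qed

lemma mm_in_S:
  fixes M :: "('q::finite, 'a) prob_automaton"
  assumes "u \<in> markov_monoid M"
  shows "u \<in> S_level M (CARD('q) - hgt u)"
  using assms
proof (induction rule: markov_monoid.induct)
  case (letter a)
  have "letter_word M a \<in> S_level M 0" by (auto intro: gen.base)
  thus ?case using S_mono[of 0] by blast
next
  case one
  have "one_word \<in> S_level M 0" by (auto intro: gen.base)
  thus ?case using S_mono[of 0] by blast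
next
  case (concat u v)
  have "u \<in> S_level M (CARD('q) - hgt (lconcat u v))"
    using concat.IH(1) S_mono[of "CARD('q) - hgt u" "CARD('q) - hgt (lconcat u v)" M]
      hgt_concat_left[of u v] by (meson diff_le_mono2 subsetD)
  moreover have "v \<in> S_level M (CARD('q) - hgt (lconcat u v))"
    using concat.IH(2) S_mono[of "CARD('q) - hgt v" "CARD('q) - hgt (lconcat u v)" M]
      hgt_concat_right[of u v] by (meson diff_le_mono2 subsetD)
  ultimately show ?case by (rule S_concat)
next
  case (iter u)
  show ?case
  proof (cases "sharp u = u")
    case True thus ?thesis using iter.IH by simp
  next
    case False
    have lt: "hgt (sharp u) < hgt u"
      using hgt_sharp[OF iter.hyps(2) mm_total[OF iter.hyps(1)] False] .
    have sh: "sharp u \<in> S_level M (Suc (CARD('q) - hgt u))"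
      unfolding S_level.simps using iter.IH iter.hyps(2) by (intro gen.base) blast
    have le: "Suc (CARD('q) - hgt u) \<le> CARD('q) - hgt (sharp u)"
      using lt hgt_le[of u] by linarith
    have "S_level M (Suc (CARD('q) - hgt u)) \<subseteq> S_level M (CARD('q) - hgt (sharp u))"
      by (rule S_mono[OF le])
    with sh show ?thesis by (rule subsetD[rotated])
  qed
qed

theorem theorem4p7:
  fixes M :: "('q::finite, 'a::finite) prob_automaton"
  shows "(\<forall>u \<in> markov_monoid M. u \<in> S_level M CARD('q) \<and> sharp_height M u \<le> CARD('q))
         \<and> markov_monoid M = S_level M CARD('q)"
proof -
  have A: "u \<in> S_level M CARD('q)" if "u \<in> markov_monoid M" for u
    using mm_in_S[OF that] S_mono[of "CARD('q) - hgt u" "CARD('q)" M] by auto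
  have B: "sharp_height M u \<le> CARD('q)" if "u \<in> markov_monoid M" for u
    unfolding sharp_height_def using A[OF that] by (rule Least_le)
  have C: "markov_monoid M = S_level M CARD('q)"
  proof (rule equalityI)
    show "markov_monoid M \<subseteq> S_level M CARD('q)" using A by (rule subsetI)
    show "S_level M CARD('q) \<subseteq> markov_monoid M" by (rule S_in_mm)
  qed
  show ?thesis
  proof (intro conjI ballI)
    fix u assume "u \<in> markov_monoid M"
    thus "u \<in> S_level M CARD('q)" by (rule A)
    show "sharp_height M u \<le> CARD('q)" using \<open>u \<in> markov_monoid M\<close> by (rule B)
  next
    show "markov_monoid M = S_level M CARD('q)" by (rule C)
  qed
qed

end
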